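(* Let $\sigma$ satisfy Condition $O_N$. Then: (i) for $\delta_0\le\lambda<1$ and $0<r\le r_0$, the sets $L_i^r(\lambda)$ ($1\le i\le N$), $L^r(\lambda)$, $\Sigma^r(\lambda)$ and $\Sigma(1)$ are open; (ii) if $1\le k\le N$ and $0<r<s\le r_0$, then $\overline{S_k^r(\lambda)}\subset S_k^s(\lambda)$ for all $0\le\lambda\le1$, and $\overline{\Sigma^r(\lambda)}\subset\Sigma^s(\lambda)$ for all $\delta_0\le\lambda<1$; (iii) if $\Delta\subset\Sigma(1)$ is compact, then $\Delta\subset\Sigma^r(\lambda)$ for some $r\in(0,r_0)$ and $\lambda\in[\delta_0,1)$.
   Context: Wave cone: $\Gamma=\{(p\otimes a,B):p\in\mathbb R^m,\ a\in\mathbb R^n\setminus\{0\},\ B\in\mathbb R^{m\times n},\ Ba=0\}$, $p\otimes a=pa^T$. Write $\rho=(\rho^1,\rho^2)\in\mathbb R^{m\times n}\times\mathbb R^{m\times n}$; $\mathbb B_r,\bar{\mathbb B}_r$ are open/closed balls of radius $r$ about $0$. Condition $O_N$ ($N\ge2$): $\sigma\colon\mathbb R^{m\times n}\to\mathbb R^{m\times n}$ continuous with graph $\mathcal K$; there exist $r_0>0$, $0<\delta_1<\delta_2<1$ and continuous $(\kappa_i,\gamma_i)\colon\bar{\mathbb B}_{r_0}\to[1/\delta_2,1/\delta_1]\times\Gamma$ with $\sum_{i=1}^N\gamma_i\equiv0$ such that, with $\pi_1(\rho)=\rho$, $\pi_i(\rho)=\rho+\gamma_1(\rho)+\dots+\gamma_{i-1}(\rho)$,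 $\xi_i(\rho)=\pi_i(\rho)+\kappa_i(\rho)\gamma_i(\rho)$: (P1)(i) $\xi_i(\rho)\in\mathcal K$ on $\bar{\mathbb B}_{r_0}$; (ii) $\xi_i^1(\bar{\mathbb B}_{r_0})\cap\xi_j^1(\bar{\mathbb B}_{r_0})=\pi_i^1(\bar{\mathbb B}_{r_0})\cap\pi_j^1(\bar{\mathbb B}_{r_0})=\emptyset$ for $i\neq j$; (P2) with $S_i^r(\lambda)=\{\lambda\xi_i(\rho)+(1-\lambda)\pi_i(\rho):\rho\in\mathbb B_r\}$ ($0<r\le r_0$, $0\le\lambda\le1$), there exists $\delta_0\in(\delta_2,1)$ such that for all $0<r\le r_0$ and $\lambda\in\{0\}\cup[\delta_0,1)$ the sets $S_1^r(\lambda),\dots,S_N^r(\lambda)$ are open and pairwise disjoint. Derived sets: $L_i^r(\lambda)=\bigcup\{[\alpha,\beta]:\alpha\in S_i^r(\lambda),\beta\in S_i^r(0),\alpha-\beta\in\Gamma\}$; $L^r(\lambda)=\bigcup_iL_i^r(\lambda)$; $\Sigma^r(\lambda)=\bigcup_{\delta_0\le\lambda'\le\lambda}L^r(\lambda')$ for $\delta_0\le\lambda<1$; $\Sigma(1)=\bigcup_{\delta_0\le\lambda<1}\Sigma^{r_0}(\lambda)$. *)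

theory Defs
  imports "HOL-Analysis.Analysis"
begin

text \<open>Matrices in R^{m x n} are rendered as real^'n^'m (m rows, n columns);
 the variable rho = (rho^1, rho^2) lives in the product space, with the product
 (Euclidean) norm.  Indices i range over {1..N}.\<close>

definition outer :: "real^'m \<Rightarrow> real^'n \<Rightarrow> real^'n^'m" where
  "outer p a = (\<chi> i j. p $ i * a $ j)"

definition wave_cone :: "((real^'n^'m) \<times> (real^'n^'m)) set" where
  "wave_cone = {(outer p a, B) | p a B. a \<noteq> 0 \<and> B *v a = 0}"

definition graph_of :: "(real^'n^'m \<Rightarrow> real^'n^'m) \<Rightarrow> ((real^'n^'m) \<times> (real^'n^'m)) set" where
  "graph_of \<sigma> = {(A, \<sigma> A) | A. True}"

definition pi_map :: "(nat \<Rightarrow> 'a::real_vector \<Rightarrow> 'a) \<Rightarrow> nat \<Rightarrow> 'a \<Rightarrow> 'a" where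
  "pi_map \<gamma> i \<rho> = \<rho> + (\<Sum>j\<in>{1..<i}. \<gamma> j \<rho>)"

definition xi_map :: "(nat \<Rightarrow> 'a \<Rightarrow> real) \<Rightarrow> (nat \<Rightarrow> 'a::real_vector \<Rightarrow> 'a) \<Rightarrow> nat \<Rightarrow> 'a \<Rightarrow> 'a" where
  "xi_map \<kappa> \<gamma> i \<rho> = pi_map \<gamma> i \<rho> + \<kappa> i \<rho> *\<^sub>R \<gamma> i \<rho>"

definition S_set :: "(nat \<Rightarrow> 'a \<Rightarrow> real) \<Rightarrow> (nat \<Rightarrow> 'a::real_normed_vector \<Rightarrow> 'a) \<Rightarrow> nat \<Rightarrow> real \<Rightarrow> real \<Rightarrow> 'a set" where
  "S_set \<kappa> \<gamma> i r lam =
     {lam *\<^sub>R xi_map \<kappa> \<gamma> i \<rho> + (1 - lam) *\<^sub>R pi_map \<gamma> i \<rho> | \<rho>. \<rho> \<in> ball 0 r}"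

definition L_set :: "(nat \<Rightarrow> (real^'n^'m) \<times> (real^'n^'m) \<Rightarrow> real) \<Rightarrow>
    (nat \<Rightarrow> (real^'n^'m) \<times> (real^'n^'m) \<Rightarrow> (real^'n^'m) \<times> (real^'n^'m)) \<Rightarrow>
    nat \<Rightarrow> real \<Rightarrow> real \<Rightarrow> ((real^'n^'m) \<times> (real^'n^'m)) set" where
  "L_set \<kappa> \<gamma> i r lam =
     \<Union>{closed_segment \<alpha> \<beta> | \<alpha> \<beta>. \<alpha> \<in> S_set \<kappa> \<gamma> i r lam \<and> \<beta> \<in> S_set \<kappa> \<gamma> i r 0 \<and> \<alpha> - \<beta> \<in> wave_cone}"

definition L_union :: "nat \<Rightarrow> (nat \<Rightarrow> (real^'n^'m) \<times> (real^'n^'m) \<Rightarrow> real) \<Rightarrow>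
    (nat \<Rightarrow> (real^'n^'m) \<times> (real^'n^'m) \<Rightarrow> (real^'n^'m) \<times> (real^'n^'m)) \<Rightarrow>
    real \<Rightarrow> real \<Rightarrow> ((real^'n^'m) \<times> (real^'n^'m)) set" where
  "L_union N \<kappa> \<gamma> r lam = (\<Union>i\<in>{1..N}. L_set \<kappa> \<gamma> i r lam)"

definition Sigma_set :: "nat \<Rightarrow> real \<Rightarrow> (nat \<Rightarrow> (real^'n^'m) \<times> (real^'n^'m) \<Rightarrow> real) \<Rightarrow>
    (nat \<Rightarrow> (real^'n^'m) \<times> (real^'n^'m) \<Rightarrow> (real^'n^'m) \<times> (real^'n^'m)) \<Rightarrow>
    real \<Rightarrow> real \<Rightarrow> ((real^'n^'m) \<times> (real^'n^'m)) set" where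
  "Sigma_set N \<delta>0 \<kappa> \<gamma> r lam = (\<Union>lam'\<in>{\<delta>0..lam}. L_union N \<kappa> \<gamma> r lam')"

definition Sigma_one :: "nat \<Rightarrow> real \<Rightarrow> real \<Rightarrow> (nat \<Rightarrow> (real^'n^'m) \<times> (real^'n^'m) \<Rightarrow> real) \<Rightarrow>
    (nat \<Rightarrow> (real^'n^'m) \<times> (real^'n^'m) \<Rightarrow> (real^'n^'m) \<times> (real^'n^'m)) \<Rightarrow>
    ((real^'n^'m) \<times> (real^'n^'m)) set" where
  "Sigma_one N r0 \<delta>0 \<kappa> \<gamma> = (\<Union>lam\<in>{\<delta>0..<1}. Sigma_set N \<delta>0 \<kappa> \<gamma> r0 lam)"

definition condition_O :: "nat \<Rightarrow> (real^'n^'m \<Rightarrow> real^'n^'m) \<Rightarrow> real \<Rightarrow> real \<Rightarrow> real \<Rightarrow> real \<Rightarrow>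
    (nat \<Rightarrow> (real^'n^'m) \<times> (real^'n^'m) \<Rightarrow> real) \<Rightarrow>
    (nat \<Rightarrow> (real^'n^'m) \<times> (real^'n^'m) \<Rightarrow> (real^'n^'m) \<times> (real^'n^'m)) \<Rightarrow> bool" where
  "condition_O N \<sigma> r0 \<delta>1 \<delta>2 \<delta>0 \<kappa> \<gamma> \<longleftrightarrow>
     N \<ge> 2 \<and> continuous_on UNIV \<sigma> \<and>
     r0 > 0 \<and> 0 < \<delta>1 \<and> \<delta>1 < \<delta>2 \<and> \<delta>2 < 1 \<and>
     (\<forall>i\<in>{1..N}. continuous_on (cball 0 r0) (\<kappa> i) \<and> continuous_on (cball 0 r0) (\<gamma> i) \<and>
        (\<forall>\<rho>\<in>cball 0 r0. \<kappa> i \<rho> \<in> {1/\<delta>2..1/\<delta>1} \<and> \<gamma> i \<rho> \<in> wave_cone)) \<and>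
     (\<forall>\<rho>\<in>cball 0 r0. (\<Sum>i\<in>{1..N}. \<gamma> i \<rho>) = 0) \<and>
     \<comment> \<open>(P1)(i)\<close>
     (\<forall>i\<in>{1..N}. \<forall>\<rho>\<in>cball 0 r0. xi_map \<kappa> \<gamma> i \<rho> \<in> graph_of \<sigma>) \<and>
     \<comment> \<open>(P1)(ii)\<close>
     (\<forall>i\<in>{1..N}. \<forall>j\<in>{1..N}. i \<noteq> j \<longrightarrow>
        (fst \<circ> xi_map \<kappa> \<gamma> i) ` cball 0 r0 \<inter> (fst \<circ> xi_map \<kappa> \<gamma> j) ` cball 0 r0 = {} \<and>
        (fst \<circ> pi_map \<gamma> i) ` cball 0 r0 \<inter> (fst \<circ> pi_map \<gamma> j) ` cball 0 r0 = {}) \<and>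
     \<comment> \<open>(P2)\<close>
     \<delta>2 < \<delta>0 \<and> \<delta>0 < 1 \<and>
     (\<forall>r\<in>{0<..r0}. \<forall>lam\<in>insert 0 {\<delta>0..<1}.
        (\<forall>i\<in>{1..N}. open (S_set \<kappa> \<gamma> i r lam)) \<and>
        (\<forall>i\<in>{1..N}. \<forall>j\<in>{1..N}. i \<noteq> j \<longrightarrow> S_set \<kappa> \<gamma> i r lam \<inter> S_set \<kappa> \<gamma> j r lam = {}))"

end

theory Submission
  imports Defs
begin

lemma outer_mult_vec: "outer p a *v v = (a \<bullet> v) *\<^sub>R p"
  by (simp add: vec_eq_iff outer_def matrix_vector_mult_def inner_vec_def sum_distrib_left sum_distrib_right mult.commute mult.left_commute)

lemma outer_scale: "outer (c *\<^sub>R p) a = outer p (c *\<^sub>R a)"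
  by (simp add: vec_eq_iff outer_def)

lemma mv_scale: "(B::real^'n^'m) *v (c *\<^sub>R a) = c *\<^sub>R (B *v a)"
  by (simp add: vec_eq_iff matrix_vector_mult_def sum_distrib_left mult.left_commute)

lemma wave_cone_alt:
  "(wave_cone :: ((real^'n^'m) \<times> (real^'n^'m)) set) =
     {y. \<exists>a. a \<in> sphere (0::real^'n) 1 \<and> (a, y) \<in> {(a, M, B). B *v a = 0 \<and> M = outer (M *v a) a}}"
proof (intro set_eqI iffI)
  fix y :: "(real^'n^'m) \<times> (real^'n^'m)"
  assume "y \<in> wave_cone"
  then obtain p a B where y: "y = (outer p a, B)" and a: "a \<noteq> 0" "B *v a = 0"
    unfolding wave_cone_def by blast
  define c where "c = a /\<^sub>R norm a"
  have nc: "norm c = 1" using a by (simp add: c_def)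
  have Bc: "B *v c = 0" using a by (simp add: c_def mv_scale)
  have ac: "a = norm a *\<^sub>R c" using a by (simp add: c_def)
  have "outer p a = outer (norm a *\<^sub>R p) c"
    by (subst ac) (simp add: outer_scale)
  moreover have "outer p a *v c = norm a *\<^sub>R p"
    using nc by (simp add: outer_mult_vec c_def inner_commute dot_square_norm power2_eq_square)
  ultimately show "y \<in> {y. \<exists>a. a \<in> sphere (0::real^'n) 1 \<and> (a, y) \<in> {(a, M, B). B *v a = 0 \<and> M = outer (M *v a) a}}"
    using nc Bc y by auto
next
  fix y :: "(real^'n^'m) \<times> (real^'n^'m)"
  assume "y \<in> {y. \<exists>a. a \<in> sphere (0::real^'n) 1 \<and> (a, y) \<in> {(a, M, B). B *v a = 0 \<and> M = outer (M *v a) a}}"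
  then obtain a M B where "y = (M, B)" "norm a = 1" "B *v a = 0" "M = outer (M *v a) a" by auto
  then show "y \<in> wave_cone" unfolding wave_cone_def
    by (smt (verit, ccfv_threshold) mem_Collect_eq norm_zero)
qed

lemma closed_wave_cone: "closed (wave_cone :: ((real^'n^'m) \<times> (real^'n^'m)) set)"
proof -
  have cmv: "continuous_on UNIV (\<lambda>x::(real^'n) \<times> (real^'n^'m) \<times> (real^'n^'m). (g x :: real^'n^'m) *v (h x :: real^'n))"
    if "continuous_on UNIV g" "continuous_on UNIV h" for g h
    unfolding matrix_vector_mult_def
    by (intro continuous_intros that)
  have co: "continuous_on UNIV (\<lambda>x::(real^'n) \<times> (real^'n^'m) \<times> (real^'n^'m). outer (g x :: real^'m) (h x :: real^'n))"
    if "continuous_on UNIV g" "continuous_on UNIV h" for g h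
    unfolding outer_def
    by (intro continuous_intros that)
  have "closed {x::(real^'n) \<times> (real^'n^'m) \<times> (real^'n^'m). snd (snd x) *v fst x = 0 \<and> fst (snd x) = outer (fst (snd x) *v fst x) (fst x)}"
    by (intro closed_Collect_conj closed_Collect_eq cmv co continuous_intros)
  moreover have "{(a, M, B). B *v a = 0 \<and> M = outer (M *v a) a} = {x::(real^'n) \<times> (real^'n^'m) \<times> (real^'n^'m). snd (snd x) *v fst x = 0 \<and> fst (snd x) = outer (fst (snd x) *v fst x) (fst x)}"
    by auto
  ultimately show ?thesis
    unfolding wave_cone_alt by (intro closed_compact_projection) auto
qed


lemma seg_union_open:
  fixes A B :: "'a::real_normed_vector set"
  assumes "open A" "open B"
  shows "open (\<Union>{closed_segment a b | a b. a \<in> A \<and> b \<in> B \<and> a - b \<in> C})"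
  unfolding open_contains_ball
proof (intro ballI)
  fix x assume "x \<in> \<Union>{closed_segment a b | a b. a \<in> A \<and> b \<in> B \<and> a - b \<in> C}"
  then obtain a b where ab: "a \<in> A" "b \<in> B" "a - b \<in> C" "x \<in> closed_segment a b" by blast
  then obtain u where u: "0 \<le> u" "u \<le> 1" "x = (1 - u) *\<^sub>R a + u *\<^sub>R b"
    unfolding closed_segment_def by blast
  obtain e1 where e1: "e1 > 0" "ball a e1 \<subseteq> A" using assms(1) ab(1) open_contains_ball by blast
  obtain e2 where e2: "e2 > 0" "ball b e2 \<subseteq> B" using assms(2) ab(2) open_contains_ball by blast
  show "\<exists>e>0. ball x e \<subseteq> \<Union>{closed_segment a b | a b. a \<in> A \<and> b \<in> B \<and> a - b \<in> C}"
  proof (intro exI conjI subsetI)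
    show "min e1 e2 > 0" using e1 e2 by simp
    fix y assume y: "y \<in> ball x (min e1 e2)"
    define d where "d = y - x"
    have nd: "norm d < min e1 e2" using y by (simp add: d_def dist_norm norm_minus_commute)
    have "a + d \<in> A" using e1 nd by (intro subsetD[OF e1(2)]) (simp add: dist_norm)
    moreover have "b + d \<in> B" using e2 nd by (intro subsetD[OF e2(2)]) (simp add: dist_norm)
    moreover have "(a + d) - (b + d) \<in> C" using ab by simp
    moreover have "y \<in> closed_segment (a + d) (b + d)"
      unfolding closed_segment_def using u
      by (intro CollectI exI[of _ u]) (simp add: d_def algebra_simps)
    ultimately show "y \<in> \<Union>{closed_segment a b | a b. a \<in> A \<and> b \<in> B \<and> a - b \<in> C}" by blast
  qed
qed

definition Fm :: "(nat \<Rightarrow> 'a \<Rightarrow> real) \<Rightarrow> (nat \<Rightarrow> 'a::real_normed_vector \<Rightarrow> 'a) \<Rightarrow> nat \<Rightarrow> real \<Rightarrow> 'a \<Rightarrow> 'a" where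
  "Fm \<kappa> \<gamma> i lam \<rho> = lam *\<^sub>R xi_map \<kappa> \<gamma> i \<rho> + (1 - lam) *\<^sub>R pi_map \<gamma> i \<rho>"

lemma S_set_eq: "S_set \<kappa> \<gamma> i r lam = Fm \<kappa> \<gamma> i lam ` ball 0 r"
  by (auto simp: S_set_def Fm_def)

lemma S_set_mono: "r \<le> r' \<Longrightarrow> S_set \<kappa> \<gamma> i r lam \<subseteq> S_set \<kappa> \<gamma> i r' lam"
  unfolding S_set_eq by (intro image_mono) auto

lemma L_set_mono: "r \<le> r' \<Longrightarrow> L_set \<kappa> \<gamma> i r lam \<subseteq> L_set \<kappa> \<gamma> i r' lam"
proof
  fix x assume r: "r \<le> r'" and "x \<in> L_set \<kappa> \<gamma> i r lam"
  then obtain a b where ab: "a \<in> S_set \<kappa> \<gamma> i r lam" "b \<in> S_set \<kappa> \<gamma> i r 0" "a - b \<in> wave_cone" "x \<in> closed_segment a b"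
    unfolding L_set_def by blast
  have "a \<in> S_set \<kappa> \<gamma> i r' lam" "b \<in> S_set \<kappa> \<gamma> i r' 0" using ab S_set_mono[OF r] by blast+
  then show "x \<in> L_set \<kappa> \<gamma> i r' lam" unfolding L_set_def using ab by blast
qed

lemma Sigma_set_mono: "r \<le> r' \<Longrightarrow> l \<le> l' \<Longrightarrow> Sigma_set N \<delta>0 \<kappa> \<gamma> r l \<subseteq> Sigma_set N \<delta>0 \<kappa> \<gamma> r' l'"
  unfolding Sigma_set_def L_union_def
proof (intro subsetI)
  fix x assume "r \<le> r'" "l \<le> l'" "x \<in> (\<Union>lam'\<in>{\<delta>0..l}. \<Union>i\<in>{1..N}. L_set \<kappa> \<gamma> i r lam')"
  then obtain lam' i where "lam' \<in> {\<delta>0..l}" "i \<in> {1..N}" "x \<in> L_set \<kappa> \<gamma> i r lam'" by blast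
  moreover have "L_set \<kappa> \<gamma> i r lam' \<subseteq> L_set \<kappa> \<gamma> i r' lam'" using L_set_mono \<open>r \<le> r'\<close> by blast
  ultimately show "x \<in> (\<Union>lam'\<in>{\<delta>0..l'}. \<Union>i\<in>{1..N}. L_set \<kappa> \<gamma> i r' lam')"
    using \<open>l \<le> l'\<close> by (intro UN_I[of lam']) auto
qed

lemma Fm_cont:
  assumes c: "\<forall>i\<in>{1..N}. continuous_on (cball 0 r0) (\<kappa> i) \<and> continuous_on (cball 0 r0) (\<gamma> i)"
    and i: "i \<in> {1..N}"
    and a: "continuous_on S a" and b: "continuous_on S b" and bS: "b ` S \<subseteq> cball 0 r0"
  shows "continuous_on S (\<lambda>x. Fm \<kappa> \<gamma> i (a x) (b x))"
proof -
  have pc: "continuous_on (cball 0 r0) (pi_map \<gamma> i)"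
    unfolding pi_map_def[abs_def]
    using c i by (intro continuous_intros) auto
  have xc: "continuous_on (cball 0 r0) (xi_map \<kappa> \<gamma> i)"
    unfolding xi_map_def[abs_def]
    using c i pc by (intro continuous_intros) auto
  have 1: "continuous_on S (\<lambda>x. pi_map \<gamma> i (b x))"
    by (rule continuous_on_compose2[OF pc b bS])
  have 2: "continuous_on S (\<lambda>x. xi_map \<kappa> \<gamma> i (b x))"
    by (rule continuous_on_compose2[OF xc b bS])
  show ?thesis unfolding Fm_def
    by (intro continuous_intros 1 2 a)
qed

lemma closure_image_sub:
  fixes f :: "'a::euclidean_space \<Rightarrow> 'b::euclidean_space"
  assumes "continuous_on (cball 0 r0) f" "r < s" "s \<le> r0"
  shows "closure (f ` ball 0 r) \<subseteq> f ` ball 0 s"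
proof -
  have "r \<le> r0" using assms by simp
  have "compact (f ` cball 0 r)"
    using assms \<open>r \<le> r0\<close> by (intro compact_continuous_image continuous_on_subset[OF assms(1)]) auto
  then have "closure (f ` ball 0 r) \<subseteq> f ` cball 0 r"
    by (meson ball_subset_cball closure_minimal compact_imp_closed image_mono)
  also have "\<dots> \<subseteq> f ` ball 0 s" using assms by (intro image_mono) auto
  finally show ?thesis .
qed


lemma Sigma_closure:
  fixes \<kappa> :: "nat \<Rightarrow> (real^'n^'m) \<times> (real^'n^'m) \<Rightarrow> real"
    and \<gamma> :: "nat \<Rightarrow> (real^'n^'m) \<times> (real^'n^'m) \<Rightarrow> (real^'n^'m) \<times> (real^'n^'m)"
  assumes c: "\<forall>i\<in>{1..N}. continuous_on (cball 0 r0) (\<kappa> i) \<and> continuous_on (cball 0 r0) (\<gamma> i)"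
    and rs: "r < s" "s \<le> r0"
  shows "closure (Sigma_set N \<delta>0 \<kappa> \<gamma> r lam) \<subseteq> Sigma_set N \<delta>0 \<kappa> \<gamma> s lam"
proof -
  define D where "D = {\<delta>0..lam} \<times> cball (0::(real^'n^'m) \<times> (real^'n^'m)) r \<times> cball (0::(real^'n^'m) \<times> (real^'n^'m)) r \<times> {0..1::real}"
  define H where "H i (p::real \<times> ((real^'n^'m) \<times> (real^'n^'m)) \<times> ((real^'n^'m) \<times> (real^'n^'m)) \<times> real) = Fm \<kappa> \<gamma> i (fst p) (fst (snd p)) - Fm \<kappa> \<gamma> i 0 (fst (snd (snd p)))" for i p
  define G where "G i (p::real \<times> ((real^'n^'m) \<times> (real^'n^'m)) \<times> ((real^'n^'m) \<times> (real^'n^'m)) \<times> real) = (1 - snd (snd (snd p))) *\<^sub>R Fm \<kappa> \<gamma> i (fst p) (fst (snd p)) + snd (snd (snd p)) *\<^sub>R Fm \<kappa> \<gamma> i 0 (fst (snd (snd p)))" for i p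
  define K where "K = (\<Union>i\<in>{1..N}. G i ` (D \<inter> H i -` wave_cone))"
  have cD: "compact D" unfolding D_def by (intro compact_Times compact_Icc compact_cball)
  have f1: "continuous_on D (\<lambda>p. Fm \<kappa> \<gamma> i (fst p) (fst (snd p)))" if i: "i \<in> {1..N}" for i
    using rs by (intro Fm_cont[OF c i] continuous_intros) (auto simp: D_def)
  have f2: "continuous_on D (\<lambda>p. Fm \<kappa> \<gamma> i 0 (fst (snd (snd p))))" if i: "i \<in> {1..N}" for i
    using rs by (intro Fm_cont[OF c i] continuous_intros) (auto simp: D_def)
  have cK: "compact K"
    unfolding K_def
  proof (intro compact_UN finite_atLeastAtMost)
    fix i assume i: "i \<in> {1..N}"
    have contH: "continuous_on D (H i)"
      unfolding H_def[abs_def] by (intro continuous_intros f1 f2 i)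
    have "closed (D \<inter> H i -` wave_cone)"
      by (rule continuous_closed_preimage[OF contH compact_imp_closed[OF cD] closed_wave_cone])
    moreover have "D \<inter> H i -` wave_cone = (D \<inter> H i -` wave_cone) \<inter> D" by blast
    ultimately have "compact (D \<inter> H i -` wave_cone)"
      using closed_Int_compact[OF _ cD] by metis
    moreover have "continuous_on D (G i)"
      unfolding G_def[abs_def]
      by (intro continuous_intros f1 f2 i)
    then have "continuous_on (D \<inter> H i -` wave_cone) (G i)"
      by (rule continuous_on_subset) blast
    ultimately show "compact (G i ` (D \<inter> H i -` wave_cone))"
      by (rule compact_continuous_image[rotated])
  qed
  have sub1: "Sigma_set N \<delta>0 \<kappa> \<gamma> r lam \<subseteq> K"
  proof
    fix x assume "x \<in> Sigma_set N \<delta>0 \<kappa> \<gamma> r lam"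
    then obtain lam' i where l: "lam' \<in> {\<delta>0..lam}" and i: "i \<in> {1..N}" and x: "x \<in> L_set \<kappa> \<gamma> i r lam'"
      unfolding Sigma_set_def L_union_def by blast
    then obtain a b where ab: "a \<in> S_set \<kappa> \<gamma> i r lam'" "b \<in> S_set \<kappa> \<gamma> i r 0" "a - b \<in> wave_cone" "x \<in> closed_segment a b"
      unfolding L_set_def by blast
    obtain \<rho> where \<rho>: "\<rho> \<in> ball 0 r" "a = Fm \<kappa> \<gamma> i lam' \<rho>" using ab(1) unfolding S_set_eq by blast
    obtain \<rho>' where \<rho>': "\<rho>' \<in> ball 0 r" "b = Fm \<kappa> \<gamma> i 0 \<rho>'" using ab(2) unfolding S_set_eq by blast
    obtain u where u: "0 \<le> u" "u \<le> 1" "x = (1 - u) *\<^sub>R a + u *\<^sub>R b"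
      using ab(4) unfolding closed_segment_def by blast
    have "(lam', \<rho>, \<rho>', u) \<in> D" using l \<rho> \<rho>' u unfolding D_def by simp
    moreover have "H i (lam', \<rho>, \<rho>', u) \<in> wave_cone" using \<rho> \<rho>' ab(3) by (simp add: H_def)
    ultimately have pm: "(lam', \<rho>, \<rho>', u) \<in> D \<inter> H i -` wave_cone" by simp
    have xe: "x = G i (lam', \<rho>, \<rho>', u)" using u \<rho> \<rho>' by (simp add: G_def)
    show "x \<in> K" unfolding K_def
      using xe pm i by blast
  qed
  have sub2: "K \<subseteq> Sigma_set N \<delta>0 \<kappa> \<gamma> s lam"
  proof
    fix x assume "x \<in> K"
    then obtain i p where i: "i \<in> {1..N}" and pp: "p \<in> D \<inter> H i -` wave_cone" and xp: "x = G i p"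
      unfolding K_def by blast
    obtain l \<rho> \<rho>' t where pe: "p = (l, \<rho>, \<rho>', t)" using prod_cases4 by blast
    have p: "(l, \<rho>, \<rho>', t) \<in> D" "H i (l, \<rho>, \<rho>', t) \<in> wave_cone" using pp pe by auto
    have x: "x = G i (l, \<rho>, \<rho>', t)" using xp pe by simp
    have a: "Fm \<kappa> \<gamma> i l \<rho> \<in> S_set \<kappa> \<gamma> i s l" using p(1) rs unfolding S_set_eq D_def by auto
    have b: "Fm \<kappa> \<gamma> i 0 \<rho>' \<in> S_set \<kappa> \<gamma> i s 0" using p(1) rs unfolding S_set_eq D_def by auto
    have "x \<in> closed_segment (Fm \<kappa> \<gamma> i l \<rho>) (Fm \<kappa> \<gamma> i 0 \<rho>')"
      using p(1) x unfolding closed_segment_def D_def G_def by auto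
    moreover have "closed_segment (Fm \<kappa> \<gamma> i l \<rho>) (Fm \<kappa> \<gamma> i 0 \<rho>') \<in> {closed_segment a b | a b. a \<in> S_set \<kappa> \<gamma> i s l \<and> b \<in> S_set \<kappa> \<gamma> i s 0 \<and> a - b \<in> wave_cone}"
      using a b p(2) unfolding H_def by (intro CollectI exI conjI refl) auto
    ultimately have "x \<in> L_set \<kappa> \<gamma> i s l"
      unfolding L_set_def by (rule UnionI[rotated])
    moreover have "l \<in> {\<delta>0..lam}" using p(1) by (auto simp: D_def)
    ultimately show "x \<in> Sigma_set N \<delta>0 \<kappa> \<gamma> s lam"
      unfolding Sigma_set_def L_union_def using i by blast
  qed
  have "closure (Sigma_set N \<delta>0 \<kappa> \<gamma> r lam) \<subseteq> K"
    using sub1 cK by (simp add: closure_minimal compact_imp_closed)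
  then show ?thesis using sub2 by blast
qed


theorem proposition3p9:
  fixes \<sigma> :: "real^'n^'m \<Rightarrow> real^'n^'m"
    and N :: nat and r0 \<delta>1 \<delta>2 \<delta>0 :: real
    and \<kappa> :: "nat \<Rightarrow> (real^'n^'m) \<times> (real^'n^'m) \<Rightarrow> real"
    and \<gamma> :: "nat \<Rightarrow> (real^'n^'m) \<times> (real^'n^'m) \<Rightarrow> (real^'n^'m) \<times> (real^'n^'m)"
  assumes "condition_O N \<sigma> r0 \<delta>1 \<delta>2 \<delta>0 \<kappa> \<gamma>"
  shows "(\<forall>lam\<in>{\<delta>0..<1}. \<forall>r\<in>{0<..r0}.
            (\<forall>i\<in>{1..N}. open (L_set \<kappa> \<gamma> i r lam)) \<and>
            open (L_union N \<kappa> \<gamma> r lam) \<and>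
            open (Sigma_set N \<delta>0 \<kappa> \<gamma> r lam) \<and>
            open (Sigma_one N r0 \<delta>0 \<kappa> \<gamma>))
       \<and> (\<forall>k\<in>{1..N}. \<forall>r s. 0 < r \<and> r < s \<and> s \<le> r0 \<longrightarrow>
            (\<forall>lam\<in>{0..1}. closure (S_set \<kappa> \<gamma> k r lam) \<subseteq> S_set \<kappa> \<gamma> k s lam) \<and>
            (\<forall>lam\<in>{\<delta>0..<1}. closure (Sigma_set N \<delta>0 \<kappa> \<gamma> r lam) \<subseteq> Sigma_set N \<delta>0 \<kappa> \<gamma> s lam))
       \<and> (\<forall>\<Delta>. compact \<Delta> \<and> \<Delta> \<subseteq> Sigma_one N r0 \<delta>0 \<kappa> \<gamma> \<longrightarrow>
            (\<exists>r\<in>{0<..<r0}. \<exists>lam\<in>{\<delta>0..<1}. \<Delta> \<subseteq> Sigma_set N \<delta>0 \<kappa> \<gamma> r lam))"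
proof -
  have c: "\<forall>i\<in>{1..N}. continuous_on (cball 0 r0) (\<kappa> i) \<and> continuous_on (cball 0 r0) (\<gamma> i)"
    using assms[unfolded condition_O_def, THEN conjunct2, THEN conjunct2, THEN conjunct2, THEN conjunct2, THEN conjunct2, THEN conjunct2, THEN conjunct1] by (simp add: Ball_def)
  have r0: "r0 > 0" using assms[unfolded condition_O_def, THEN conjunct2, THEN conjunct2, THEN conjunct1] .
  have d0: "\<delta>0 < 1" using assms[unfolded condition_O_def, THEN conjunct2, THEN conjunct2, THEN conjunct2, THEN conjunct2, THEN conjunct2, THEN conjunct2, THEN conjunct2, THEN conjunct2, THEN conjunct2, THEN conjunct2, THEN conjunct2, THEN conjunct1] .
  have P2: "\<forall>r\<in>{0<..r0}. \<forall>lam\<in>insert 0 {\<delta>0..<1}. (\<forall>i\<in>{1..N}. open (S_set \<kappa> \<gamma> i r lam)) \<and> (\<forall>i\<in>{1..N}. \<forall>j\<in>{1..N}. i \<noteq> j \<longrightarrow> S_set \<kappa> \<gamma> i r lam \<inter> S_set \<kappa> \<gamma> j r lam = {})"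
    using assms[unfolded condition_O_def, THEN conjunct2, THEN conjunct2, THEN conjunct2, THEN conjunct2, THEN conjunct2, THEN conjunct2, THEN conjunct2, THEN conjunct2, THEN conjunct2, THEN conjunct2, THEN conjunct2, THEN conjunct2] .
  have op: "\<And>r lam i. r \<in> {0<..r0} \<Longrightarrow> lam \<in> insert 0 {\<delta>0..<1} \<Longrightarrow> i \<in> {1..N} \<Longrightarrow> open (S_set \<kappa> \<gamma> i r lam)"
    by (rule bspec[OF bspec[OF bspec[OF P2], THEN conjunct1]])
  have openL: "open (L_set \<kappa> \<gamma> i r lam)" if "i \<in> {1..N}" "r \<in> {0<..r0}" "lam \<in> {\<delta>0..<1}" for i r lam
    unfolding L_set_def apply (rule seg_union_open) using that by (auto intro!: op)
  have openU: "open (L_union N \<kappa> \<gamma> r lam)" if "r \<in> {0<..r0}" "lam \<in> {\<delta>0..<1}" for r lam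
    unfolding L_union_def using that by (intro open_UN ballI openL) auto
  have openS: "open (Sigma_set N \<delta>0 \<kappa> \<gamma> r lam)" if "r \<in> {0<..r0}" "lam < 1" for r lam
    unfolding Sigma_set_def using that by (intro open_UN ballI openU) auto
  have open1: "open (Sigma_one N r0 \<delta>0 \<kappa> \<gamma>)"
    unfolding Sigma_one_def using r0 by (intro open_UN ballI openS) auto
  have part1: "\<forall>lam\<in>{\<delta>0..<1}. \<forall>r\<in>{0<..r0}.
            (\<forall>i\<in>{1..N}. open (L_set \<kappa> \<gamma> i r lam)) \<and>
            open (L_union N \<kappa> \<gamma> r lam) \<and>
            open (Sigma_set N \<delta>0 \<kappa> \<gamma> r lam) \<and>
            open (Sigma_one N r0 \<delta>0 \<kappa> \<gamma>)"
    using openL openU openS open1 by (intro ballI conjI) auto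
  have part2: "\<forall>k\<in>{1..N}. \<forall>r s. 0 < r \<and> r < s \<and> s \<le> r0 \<longrightarrow>
            (\<forall>lam\<in>{0..1}. closure (S_set \<kappa> \<gamma> k r lam) \<subseteq> S_set \<kappa> \<gamma> k s lam) \<and>
            (\<forall>lam\<in>{\<delta>0..<1}. closure (Sigma_set N \<delta>0 \<kappa> \<gamma> r lam) \<subseteq> Sigma_set N \<delta>0 \<kappa> \<gamma> s lam)"
  proof (intro ballI allI impI conjI)
    fix k r s lam assume k: "k \<in> {1..N}" and rs: "0 < r \<and> r < s \<and> s \<le> r0"
    have "continuous_on (cball 0 r0) (\<lambda>x. Fm \<kappa> \<gamma> k lam x)"
      by (intro Fm_cont[OF c k] continuous_intros) auto
    then show "closure (S_set \<kappa> \<gamma> k r lam) \<subseteq> S_set \<kappa> \<gamma> k s lam"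
      unfolding S_set_eq using rs by (intro closure_image_sub) auto
  next
    fix k r s lam assume rs: "0 < r \<and> r < s \<and> s \<le> r0"
    then show "closure (Sigma_set N \<delta>0 \<kappa> \<gamma> r lam) \<subseteq> Sigma_set N \<delta>0 \<kappa> \<gamma> s lam"
      by (intro Sigma_closure[OF c]) auto
  qed
  define rk where "rk k = r0 - r0 / (real k + 2)" for k :: nat
  define lk where "lk k = 1 - (1 - \<delta>0) / (real k + 2)" for k :: nat
  have rk_pos: "0 < rk k" "rk k < r0" for k
  proof -
    have "r0 / (real k + 2) < r0" using r0 by (simp add: divide_less_eq)
    moreover have "r0 / (real k + 2) > 0" using r0 by simp
    ultimately show "0 < rk k" "rk k < r0" by (auto simp: rk_def)
  qed
  have lk_b: "\<delta>0 \<le> lk k" "lk k < 1" for k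
  proof -
    have "(1 - \<delta>0) / (real k + 2) \<le> 1 - \<delta>0" using d0 by (simp add: divide_le_eq)
    moreover have "(1 - \<delta>0) / (real k + 2) > 0" using d0 by simp
    ultimately show "\<delta>0 \<le> lk k" "lk k < 1" by (auto simp: lk_def)
  qed
  have rk_mono: "rk k \<le> rk k'" if "k \<le> k'" for k k'
    unfolding rk_def using that r0 by (auto intro!: divide_left_mono)
  have lk_mono: "lk k \<le> lk k'" if "k \<le> k'" for k k'
    unfolding lk_def using that d0 by (auto intro!: divide_left_mono)
  have cover: "Sigma_one N r0 \<delta>0 \<kappa> \<gamma> \<subseteq> (\<Union>k. Sigma_set N \<delta>0 \<kappa> \<gamma> (rk k) (lk k))"
  proof
    fix x assume "x \<in> Sigma_one N r0 \<delta>0 \<kappa> \<gamma>"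
    then obtain lam lam' i where l: "lam < 1" "lam' \<in> {\<delta>0..lam}" and i: "i \<in> {1..N}" and x: "x \<in> L_set \<kappa> \<gamma> i r0 lam'"
      unfolding Sigma_one_def Sigma_set_def L_union_def by auto
    then obtain a b where ab: "a \<in> S_set \<kappa> \<gamma> i r0 lam'" "b \<in> S_set \<kappa> \<gamma> i r0 0" "a - b \<in> wave_cone" "x \<in> closed_segment a b"
      unfolding L_set_def by blast
    obtain \<rho> where \<rho>: "norm \<rho> < r0" "a = Fm \<kappa> \<gamma> i lam' \<rho>" using ab(1) unfolding S_set_eq by auto
    obtain \<rho>' where \<rho>': "norm \<rho>' < r0" "b = Fm \<kappa> \<gamma> i 0 \<rho>'" using ab(2) unfolding S_set_eq by auto
    define m where "m = max (norm \<rho>) (norm \<rho>')"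
    have m: "m < r0" using \<rho> \<rho>' by (simp add: m_def)
    obtain k :: nat where k: "real k \<ge> max (r0 / (r0 - m)) ((1 - \<delta>0) / (1 - lam'))"
      using real_nat_ceiling_ge by blast
    have "r0 / (real k + 2) < r0 - m"
    proof -
      have "r0 / (r0 - m) < real k + 2" using k by linarith
      then have "r0 < (real k + 2) * (r0 - m)" using m by (simp add: divide_less_eq)
      then show ?thesis by (simp add: divide_less_eq mult.commute)
    qed
    then have mr: "m < rk k" by (simp add: rk_def)
    have "lam' < 1" using l by auto
    have "(1 - \<delta>0) / (1 - lam') < real k + 2" using k by linarith
    then have "1 - \<delta>0 < (real k + 2) * (1 - lam')" using \<open>lam' < 1\<close> by (simp add: divide_less_eq)
    then have "(1 - \<delta>0) / (real k + 2) < 1 - lam'" by (simp add: divide_less_eq mult.commute)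
    then have ll: "lam' \<le> lk k" by (simp add: lk_def)
    have "a \<in> S_set \<kappa> \<gamma> i (rk k) lam'" using \<rho> mr unfolding S_set_eq m_def by auto
    moreover have "b \<in> S_set \<kappa> \<gamma> i (rk k) 0" using \<rho>' mr unfolding S_set_eq m_def by auto
    ultimately have "closed_segment a b \<in> {closed_segment a b | a b. a \<in> S_set \<kappa> \<gamma> i (rk k) lam' \<and> b \<in> S_set \<kappa> \<gamma> i (rk k) 0 \<and> a - b \<in> wave_cone}"
      using ab(3) by blast
    then have "x \<in> L_set \<kappa> \<gamma> i (rk k) lam'"
      unfolding L_set_def using ab(4) by (rule UnionI)
    then have "x \<in> Sigma_set N \<delta>0 \<kappa> \<gamma> (rk k) (lk k)"
      unfolding Sigma_set_def L_union_def using i l ll by (intro UN_I[of lam']) auto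
    then show "x \<in> (\<Union>k. Sigma_set N \<delta>0 \<kappa> \<gamma> (rk k) (lk k))" by blast
  qed
  have part3: "\<forall>\<Delta>. compact \<Delta> \<and> \<Delta> \<subseteq> Sigma_one N r0 \<delta>0 \<kappa> \<gamma> \<longrightarrow>
            (\<exists>r\<in>{0<..<r0}. \<exists>lam\<in>{\<delta>0..<1}. \<Delta> \<subseteq> Sigma_set N \<delta>0 \<kappa> \<gamma> r lam)"
  proof (intro allI impI)
    fix \<Delta> :: "((real^'n^'m) \<times> (real^'n^'m)) set"
    assume h: "compact \<Delta> \<and> \<Delta> \<subseteq> Sigma_one N r0 \<delta>0 \<kappa> \<gamma>"
    have opk: "open (Sigma_set N \<delta>0 \<kappa> \<gamma> (rk k) (lk k))" for k
      using rk_pos[of k] lk_b[of k] by (intro openS) auto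
    have cov: "\<Delta> \<subseteq> (\<Union>k\<in>UNIV. Sigma_set N \<delta>0 \<kappa> \<gamma> (rk k) (lk k))"
      using h cover by (rule_tac subset_trans) auto
    obtain D where D: "finite D" "\<Delta> \<subseteq> (\<Union>k\<in>D. Sigma_set N \<delta>0 \<kappa> \<gamma> (rk k) (lk k))"
      using compactE_image[of \<Delta> UNIV "\<lambda>k. Sigma_set N \<delta>0 \<kappa> \<gamma> (rk k) (lk k)", OF conjunct1[OF h] opk cov] by metis
    define K where "K = Max (insert 0 D)"
    have "\<Delta> \<subseteq> Sigma_set N \<delta>0 \<kappa> \<gamma> (rk K) (lk K)"
    proof
      fix x assume "x \<in> \<Delta>"
      then obtain k where kD: "k \<in> D" and xk: "x \<in> Sigma_set N \<delta>0 \<kappa> \<gamma> (rk k) (lk k)" using D by blast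
      have kK: "k \<le> K" using kD D(1) by (simp add: K_def)
      show "x \<in> Sigma_set N \<delta>0 \<kappa> \<gamma> (rk K) (lk K)"
        by (rule subsetD[OF Sigma_set_mono[OF rk_mono[OF kK] lk_mono[OF kK]] xk])
    qed
    moreover have "rk K \<in> {0<..<r0}" using rk_pos[of K] by simp
    moreover have "lk K \<in> {\<delta>0..<1}" using lk_b[of K] by simp
    ultimately show "\<exists>r\<in>{0<..<r0}. \<exists>lam\<in>{\<delta>0..<1}. \<Delta> \<subseteq> Sigma_set N \<delta>0 \<kappa> \<gamma> r lam"
      by blast
  qed
  show ?thesis using part1 part2 part3 by (intro conjI)
qed

end
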